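(* Let $\Gamma$ be a gain operator on $\ell^\infty_+(\mathcal I)$ satisfying Assumption A, and suppose that for some $\rho\in\mathcal K_\infty$: (i) the set $\Psi(\Gamma_\rho)$ is cofinal; (ii) $\Gamma_\rho$ satisfies the uniform NJI condition; (iii) there is $M>0$ with $|\mathcal I_i|\le M$ for all $i\in\mathcal I$. Then there exists $\rho'\in\mathcal K_\infty$ such that $\Sigma(\hat\Gamma_{\rho'})$ is UGS and $\Sigma(\Gamma_{\rho'})$ is UGAS, where $\hat\Gamma_{\rho'}(s):=s\oplus\Gamma_{\rho'}(s)$.
   Context: Let $\mathcal I$ be a nonempty countable index set; $\ell^\infty_+(\mathcal I)$ is the cone of nonnegative real families $s=(s_i)_{i\in\mathcal I}$ with $\|s\|:=\sup_i|s_i|<\infty$, ordered componentwise; $\oplus$ is the componentwise maximum. $\mathcal K$: continuous strictly increasing $\gamma:\mathbb R_+\to\mathbb R_+$ with $\gamma(0)=0$; $\mathcal K_\infty$: unbounded elements of $\mathcal K$, acting on $\ell^\infty_+(\mathcal I)$ componentwise; $\mathcal L$: continuous strictly decreasing functions $\mathbb R_+\to\mathbb R_+$ tending to $0$; $\mathcal{KL}$: continuous $\beta$ with $\beta(\cdot,t)\in\mathcal K$ and $\beta(r,\cdot)\in\mathcal L$ for $r>0$. For $\mathcal J\subset\mathcal I$, $s_{|\mathcal J}$ agrees with $s$ on $\mathcal J$ and is $0$ elsewhere. Gain operator: for each $i$ a finite (possibly empty) $\mathcal I_i\subset\mathcal I\setminus\{i\}$; directed graph $\mathcal G$ with vertices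 $\mathcal I$ and edges $ji$, $j\in\mathcal I_i$; a pointwise equicontinuous family $\gamma_{ij}\in\mathcal K_\infty$ ($ji\in E(\mathcal G)$); functions $\mu_i:\ell^\infty_+(\mathcal I)\to[0,\infty]$ with (M1) some $\xi\in\mathcal K_\infty$ has $\mu_i(0)=0$, $\mu_i(s)\ge\xi(\|s\|)$; (M2) $\mu_i$ monotone; (M3) for each finite $\mathcal J$, $\mu_i$ restricted to vectors vanishing off $\mathcal J$ is finite-valued and continuous; (M4) for each norm-bounded $A$ and $\varepsilon>0$ there is $\delta>0$ with $\sup_i|\mu_i(s_{|\mathcal I_i})-\mu_i(s^0_{|\mathcal I_i})|\le\varepsilon$ whenever $s^0\in A$, $\|s-s^0\|\le\delta$. $\Gamma_i(s):=\mu_i([\gamma_{ij}(s_j)]_{j\in\mathcal I_i})$ (argument zero outside $\mathcal I_i$). $\Gamma_\rho:=(\mathrm{id}+\rho)\circ\Gamma$. Assumption A: there is $\eta\in\mathcal K_\infty$ with $\gamma_{ij}\ge\eta$ for all $ji\in E(\mathcal G)$, and $\mathcal I_i\ne\emptyset$ for all $i$. $\mathcal N^-_i(n)$: vertices $j$ with a directed path from $j$ to $i$ of length at most $n$ ($\mathcal N^-_i(0)=\{i\}$). For monotone $T$ with $T(0)=0$: $\Psi(T):=\{s:T(s)\le s\}$; $\Sigma(T)$ is the system $s^{n+1}=T(s^n)$; UGS: $\|T^n(s)\|\le\varphi(\|s\|)$ for some $\varphi\in\mathcal K_\infty$ and all $s,n$; UGAS: $\|T^n(s)\|\le\beta(\|s\|,n)$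 for some $\beta\in\mathcal{KL}$. A set $A$ is cofinal if every $s$ has $\hat s\in A$ with $s\le\hat s$. $T$ satisfies the uniform NJI condition if for all $r,\varepsilon>0$ there are $n\in\mathbb N$, $\delta>0$ such that for all $s$, $i$ with $s_i\ge\varepsilon$, $\|s\|\le r$ there is $j\in\mathcal N^-_i(n)$ with $s_j\ge\delta$ and $T_j(s)<s_j$. *)

theory Defs
  imports "HOL-Analysis.Analysis" "HOL-Library.Countable"
begin

definition linfp :: "('i \<Rightarrow> real) set" where
  "linfp = {s. (\<forall>i. 0 \<le> s i) \<and> bdd_above (range (\<lambda>i. \<bar>s i\<bar>))}"

definition nrm :: "('i \<Rightarrow> real) \<Rightarrow> real" where
  "nrm s = (SUP i. \<bar>s i\<bar>)"

definition restr :: "'i set \<Rightarrow> ('i \<Rightarrow> real) \<Rightarrow> ('i \<Rightarrow> real)" where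
  "restr J s = (\<lambda>j. if j \<in> J then s j else 0)"

definition classK :: "(real \<Rightarrow> real) \<Rightarrow> bool" where
  "classK g \<longleftrightarrow> continuous_on {0..} g \<and> strict_mono_on {0..} g \<and> g 0 = 0"

definition classKinf :: "(real \<Rightarrow> real) \<Rightarrow> bool" where
  "classKinf g \<longleftrightarrow> classK g \<and> (\<forall>M. \<exists>t\<ge>0. g t > M)"

definition classL :: "(real \<Rightarrow> real) \<Rightarrow> bool" where
  "classL f \<longleftrightarrow> continuous_on {0..} f \<and> (\<forall>x\<ge>0. 0 \<le> f x)
     \<and> (\<forall>x y. 0 \<le> x \<longrightarrow> x < y \<longrightarrow> f y < f x) \<and> (f \<longlongrightarrow> 0) at_top"

definition classKL :: "(real \<Rightarrow> real \<Rightarrow> real) \<Rightarrow> bool" where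
  "classKL \<beta> \<longleftrightarrow> continuous_on ({0..} \<times> {0..}) (\<lambda>(r, t). \<beta> r t)
     \<and> (\<forall>t\<ge>0. classK (\<lambda>r. \<beta> r t)) \<and> (\<forall>r>0. classL (\<beta> r))"

text \<open>Gain operator data: Ii i = neighbours of i (edges j -> i for j in Ii i),
  gam i j = gamma_ij, mu i = mu_i (values in [0,\<infinity>]).\<close>
definition gain_operator ::
  "('i \<Rightarrow> 'i set) \<Rightarrow> ('i \<Rightarrow> 'i \<Rightarrow> real \<Rightarrow> real) \<Rightarrow> ('i \<Rightarrow> ('i \<Rightarrow> real) \<Rightarrow> ereal) \<Rightarrow> bool" where
  "gain_operator Ii gam mu \<longleftrightarrow>
     (\<forall>i. finite (Ii i) \<and> i \<notin> Ii i)
   \<and> (\<forall>i. \<forall>j\<in>Ii i. classKinf (gam i j))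
   \<comment> \<open>pointwise equicontinuity of the family\<close>
   \<and> (\<forall>r\<ge>0. \<forall>\<epsilon>>0. \<exists>\<delta>>0. \<forall>i. \<forall>j\<in>Ii i. \<forall>t\<ge>0.
         \<bar>t - r\<bar> < \<delta> \<longrightarrow> \<bar>gam i j t - gam i j r\<bar> < \<epsilon>)
   \<and> (\<forall>i. \<forall>s\<in>linfp. 0 \<le> mu i s)
   \<comment> \<open>(M1)\<close>
   \<and> (\<exists>\<xi>. classKinf \<xi> \<and> (\<forall>i. mu i (\<lambda>_. 0) = 0 \<and> (\<forall>s\<in>linfp. ereal (\<xi> (nrm s)) \<le> mu i s)))
   \<comment> \<open>(M2)\<close>
   \<and> (\<forall>i. \<forall>s\<in>linfp. \<forall>s'\<in>linfp. (\<forall>j. s j \<le> s' j) \<longrightarrow> mu i s \<le> mu i s')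
   \<comment> \<open>(M3)\<close>
   \<and> (\<forall>i. \<forall>J. finite J \<longrightarrow>
        (let V = {s\<in>linfp. \<forall>j. j \<notin> J \<longrightarrow> s j = 0} in
          (\<forall>s\<in>V. \<bar>mu i s\<bar> \<noteq> \<infinity>) \<and>
          (\<forall>s\<in>V. \<forall>\<epsilon>>0. \<exists>\<delta>>0. \<forall>t\<in>V. nrm (t - s) < \<delta> \<longrightarrow>
              \<bar>mu i t - mu i s\<bar> < ereal \<epsilon>)))
   \<comment> \<open>(M4)\<close>
   \<and> (\<forall>A\<subseteq>linfp. bdd_above (nrm ` A) \<longrightarrow> (\<forall>\<epsilon>>0. \<exists>\<delta>>0.
        \<forall>s0\<in>A. \<forall>s\<in>linfp. nrm (s - s0) \<le> \<delta> \<longrightarrow>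
          (\<forall>i. \<bar>mu i (restr (Ii i) s) - mu i (restr (Ii i) s0)\<bar> \<le> ereal \<epsilon>)))"

definition Gam ::
  "('i \<Rightarrow> 'i set) \<Rightarrow> ('i \<Rightarrow> 'i \<Rightarrow> real \<Rightarrow> real) \<Rightarrow> ('i \<Rightarrow> ('i \<Rightarrow> real) \<Rightarrow> ereal)
    \<Rightarrow> ('i \<Rightarrow> real) \<Rightarrow> ('i \<Rightarrow> real)" where
  "Gam Ii gam mu s = (\<lambda>i. real_of_ereal (mu i (\<lambda>j. if j \<in> Ii i then gam i j (s j) else 0)))"

definition Gam_rho ::
  "('i \<Rightarrow> 'i set) \<Rightarrow> ('i \<Rightarrow> 'i \<Rightarrow> real \<Rightarrow> real) \<Rightarrow> ('i \<Rightarrow> ('i \<Rightarrow> real) \<Rightarrow> ereal)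
    \<Rightarrow> (real \<Rightarrow> real) \<Rightarrow> ('i \<Rightarrow> real) \<Rightarrow> ('i \<Rightarrow> real)" where
  "Gam_rho Ii gam mu \<rho> s = (\<lambda>i. Gam Ii gam mu s i + \<rho> (Gam Ii gam mu s i))"

definition assumptionA ::
  "('i \<Rightarrow> 'i set) \<Rightarrow> ('i \<Rightarrow> 'i \<Rightarrow> real \<Rightarrow> real) \<Rightarrow> bool" where
  "assumptionA Ii gam \<longleftrightarrow>
     (\<exists>\<eta>. classKinf \<eta> \<and> (\<forall>i. \<forall>j\<in>Ii i. \<forall>t\<ge>0. \<eta> t \<le> gam i j t))
   \<and> (\<forall>i. Ii i \<noteq> {})"

definition Nin :: "('i \<Rightarrow> 'i set) \<Rightarrow> 'i \<Rightarrow> nat \<Rightarrow> 'i set" where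
  "Nin Ii i n = {j. \<exists>m\<le>n. \<exists>p::nat \<Rightarrow> 'i. p 0 = j \<and> p m = i \<and> (\<forall>k<m. p k \<in> Ii (p (Suc k)))}"

definition Psi :: "(('i \<Rightarrow> real) \<Rightarrow> ('i \<Rightarrow> real)) \<Rightarrow> ('i \<Rightarrow> real) set" where
  "Psi T = {s\<in>linfp. \<forall>i. T s i \<le> s i}"

definition cofinal :: "('i \<Rightarrow> real) set \<Rightarrow> bool" where
  "cofinal A \<longleftrightarrow> (\<forall>s\<in>linfp. \<exists>s'\<in>A. \<forall>i. s i \<le> s' i)"

definition uniform_NJI :: "('i \<Rightarrow> 'i set) \<Rightarrow> (('i \<Rightarrow> real) \<Rightarrow> ('i \<Rightarrow> real)) \<Rightarrow> bool" where
  "uniform_NJI Ii T \<longleftrightarrow> (\<forall>r>0. \<forall>\<epsilon>>0. \<exists>n::nat. \<exists>\<delta>>0. \<forall>s\<in>linfp. \<forall>i.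
      \<epsilon> \<le> s i \<and> nrm s \<le> r \<longrightarrow> (\<exists>j\<in>Nin Ii i n. \<delta> \<le> s j \<and> T s j < s j))"

definition UGS :: "(('i \<Rightarrow> real) \<Rightarrow> ('i \<Rightarrow> real)) \<Rightarrow> bool" where
  "UGS T \<longleftrightarrow> (\<exists>\<phi>. classKinf \<phi> \<and> (\<forall>s\<in>linfp. \<forall>n. nrm ((T ^^ n) s) \<le> \<phi> (nrm s)))"

definition UGAS :: "(('i \<Rightarrow> real) \<Rightarrow> ('i \<Rightarrow> real)) \<Rightarrow> bool" where
  "UGAS T \<longleftrightarrow> (\<exists>\<beta>. classKL \<beta> \<and> (\<forall>s\<in>linfp. \<forall>n. nrm ((T ^^ n) s) \<le> \<beta> (nrm s) (real n)))"

end

theory Submission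
  imports Defs
begin


lemma linfp_nonneg: "s \<in> linfp \<Longrightarrow> 0 \<le> s i"
  by (simp add: linfp_def)

lemma linfp_le_nrm: "s \<in> linfp \<Longrightarrow> s i \<le> nrm s"
proof -
  assume s: "s \<in> linfp"
  have "\<bar>s i\<bar> \<le> (SUP i. \<bar>s i\<bar>)"
    using s unfolding linfp_def by (intro cSUP_upper) auto
  then show ?thesis by (simp add: nrm_def)
qed

lemma nrm_nonneg: "s \<in> linfp \<Longrightarrow> 0 \<le> nrm s"
  using linfp_le_nrm[of s undefined] linfp_nonneg[of s undefined] by linarith

lemma nrm_le: "(\<And>i. \<bar>s i\<bar> \<le> b) \<Longrightarrow> nrm s \<le> b"
  unfolding nrm_def by (rule cSUP_least) auto

lemma linfp_I: "(\<And>i. 0 \<le> s i \<and> s i \<le> b) \<Longrightarrow> s \<in> linfp"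
  unfolding linfp_def bdd_above_def by (auto intro!: exI[of _ b])

lemma nrm_le_nonneg: "(\<And>i. 0 \<le> s i \<and> s i \<le> b) \<Longrightarrow> nrm s \<le> b"
  by (rule nrm_le) auto

lemma K_nonneg: "classK g \<Longrightarrow> 0 \<le> x \<Longrightarrow> 0 \<le> g x"
  unfolding classK_def strict_mono_on_def
  by (metis atLeast_iff less_eq_real_def)

lemma K_pos: "classK g \<Longrightarrow> 0 < x \<Longrightarrow> 0 < g x"
  unfolding classK_def strict_mono_on_def by (metis atLeast_iff less_eq_real_def)

lemma K_mono: "classK g \<Longrightarrow> 0 \<le> x \<Longrightarrow> x \<le> y \<Longrightarrow> g x \<le> g y"
  unfolding classK_def strict_mono_on_def
  by (metis atLeast_iff dual_order.trans less_eq_real_def)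

lemma K_strict: "classK g \<Longrightarrow> 0 \<le> x \<Longrightarrow> x < y \<Longrightarrow> g x < g y"
  unfolding classK_def strict_mono_on_def by auto

lemma K_cont0: assumes "classK g" "e > 0" shows "\<exists>d>0. \<forall>y. 0 \<le> y \<and> y \<le> d \<longrightarrow> g y < e"
proof -
  have c: "continuous_on {0..} g" and g0: "g 0 = 0" using assms by (auto simp: classK_def)
  have "0 \<in> {0::real..}" by simp
  with c assms(2) obtain d where d: "d > 0" "\<forall>y\<in>{0..}. dist y 0 < d \<longrightarrow> dist (g y) (g 0) < e"
    unfolding continuous_on_iff by blast
  have "\<forall>y. 0 \<le> y \<and> y \<le> d/2 \<longrightarrow> g y < e"
  proof (intro allI impI)
    fix y assume "0 \<le> y \<and> y \<le> d/2"
    then have "dist (g y) (g 0) < e" using d by (auto simp: dist_real_def)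
    then show "g y < e" using g0 by (auto simp: dist_real_def)
  qed
  moreover have "d/2 > 0" using d by simp
  ultimately show ?thesis by blast
qed



definition clip :: "real \<Rightarrow> real" where "clip y = min 1 (max 0 y)"

lemma clip_bounds: "0 \<le> clip y" "clip y \<le> 1" by (auto simp: clip_def)
lemma clip_mono: "a \<le> b \<Longrightarrow> clip a \<le> clip b" by (auto simp: clip_def)
lemma clip_lip: "\<bar>clip a - clip b\<bar> \<le> \<bar>a - b\<bar>" by (auto simp: clip_def)
lemma clip_0: "y \<le> 0 \<Longrightarrow> clip y = 0" by (auto simp: clip_def)
lemma clip_1: "1 \<le> y \<Longrightarrow> clip y = 1" by (auto simp: clip_def)

lemma K_majorant:
  fixes F N :: "'a \<Rightarrow> real" and A :: "'a set"
  assumes F0: "\<forall>x\<in>A. 0 \<le> F x" and N0: "\<forall>x\<in>A. 0 \<le> N x"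
    and bnd: "\<forall>r. \<exists>B. \<forall>x\<in>A. N x \<le> r \<longrightarrow> F x \<le> B"
    and small: "\<forall>\<epsilon>>0. \<exists>\<delta>>0. \<forall>x\<in>A. N x \<le> \<delta> \<longrightarrow> F x \<le> \<epsilon>"
  shows "\<exists>\<phi>. classKinf \<phi> \<and> (\<forall>x\<in>A. F x \<le> \<phi> (N x))"
proof -
  obtain B where B: "\<And>r x. x \<in> A \<Longrightarrow> N x \<le> r \<Longrightarrow> F x \<le> B r"
    using bnd by metis
  define B' where "B' r = max 0 (B r)" for r
  have B': "\<And>r x. x \<in> A \<Longrightarrow> N x \<le> r \<Longrightarrow> F x \<le> B' r" "\<And>r. 0 \<le> B' r"
    using B unfolding B'_def by (auto simp: le_max_iff_disj)
  define P where "P = {x\<in>A. 0 < N x}"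
  define tm where "tm x r = F x * clip (2*r / N x - 1)" for x r
  define f where "f r = Sup (insert 0 ((\<lambda>x. tm x r) ` P))" for r
  have tm0: "0 \<le> tm x r" if "x \<in> P" for x r
    using that F0 clip_bounds by (auto simp: tm_def P_def)
  have tm_bnd: "tm x r \<le> B' (2*r)" if "x \<in> P" for x r
  proof (cases "2*r / N x - 1 \<le> 0")
    case True then show ?thesis using B' by (simp add: tm_def clip_0)
  next
    case False
    then have "N x \<le> 2*r" using that by (auto simp: P_def field_simps)
    then have "F x \<le> B' (2*r)" using B' that by (auto simp: P_def)
    moreover have "tm x r \<le> F x" using that F0 clip_bounds[of "2*r / N x - 1"]
      by (auto simp: tm_def P_def intro!: mult_left_le)
    ultimately show ?thesis by linarith
  qed
  have bdd: "bdd_above (insert 0 ((\<lambda>x. tm x r) ` P))" for r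
    unfolding bdd_above_def using tm_bnd B' by (auto intro!: exI[of _ "B' (2*r)"])
  have f_ge: "tm x r \<le> f r" if "x \<in> P" for x r
    unfolding f_def using that bdd by (intro cSup_upper) auto
  have f_nonneg: "0 \<le> f r" for r
    unfolding f_def using bdd by (intro cSup_upper) auto
  have f_le: "f r \<le> M" if "0 \<le> M" "\<And>x. x \<in> P \<Longrightarrow> tm x r \<le> M" for r M
    unfolding f_def using that by (intro cSup_least) auto
  have f0: "f 0 = 0"
  proof -
    have "tm x 0 \<le> 0" if "x \<in> P" for x by (simp add: tm_def clip_0)
    then have "f 0 \<le> 0" by (intro f_le) auto
    then show ?thesis using f_nonneg[of 0] by simp
  qed
  have f_mono: "f r \<le> f r'" if "r \<le> r'" for r r'
  proof (rule f_le)
    show "0 \<le> f r'" by (rule f_nonneg)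
    fix x assume x: "x \<in> P"
    then have "N x > 0" by (simp add: P_def)
    then have "2*r / N x - 1 \<le> 2*r' / N x - 1" using that by (simp add: divide_right_mono)
    then have "clip (2*r / N x - 1) \<le> clip (2*r' / N x - 1)" by (rule clip_mono)
    then have "tm x r \<le> tm x r'" using x F0 unfolding tm_def P_def by (auto intro: mult_left_mono)
    then show "tm x r \<le> f r'" using f_ge[OF x, of r'] by linarith
  qed
  have F_le: "F x \<le> f (N x)" if "x \<in> A" for x
  proof (cases "N x = 0")
    case True
    have "F x \<le> e" if "e > 0" for e
      using small that \<open>x \<in> A\<close> True N0 by (metis order_less_imp_le)
    then have "F x \<le> 0" by (metis dense not_le)
    then show ?thesis using f_nonneg by (meson order_trans)
  next
    case False
    then have x: "x \<in> P" using N0 that by (auto simp: P_def less_le)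
    then have "tm x (N x) = F x" using False by (simp add: tm_def clip_1)
    then show ?thesis using f_ge[OF x, of "N x"] by simp
  qed
  have f_small: "\<exists>d>0. \<forall>r. 0 \<le> r \<and> r \<le> d \<longrightarrow> f r \<le> e" if "e > 0" for e
  proof -
    obtain d0 where d0: "d0 > 0" "\<forall>x\<in>A. N x \<le> d0 \<longrightarrow> F x \<le> e" using small \<open>e>0\<close> by blast
    have "f r \<le> e" if r: "0 \<le> r" "r \<le> d0/2" for r
    proof (rule f_le)
      show "0 \<le> e" using \<open>e>0\<close> by simp
      fix x assume x: "x \<in> P"
      show "tm x r \<le> e"
      proof (cases "2*r / N x - 1 \<le> 0")
        case True then show ?thesis using \<open>e>0\<close> by (simp add: tm_def clip_0)
      next
        case False
        then have "N x \<le> 2*r" using x by (auto simp: P_def field_simps)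
        then have "F x \<le> e" using d0 x r by (auto simp: P_def)
        moreover have "tm x r \<le> F x" using x F0 clip_bounds[of "2*r / N x - 1"]
          by (auto simp: tm_def P_def intro!: mult_left_le)
        ultimately show ?thesis by linarith
      qed
    qed
    then show ?thesis using d0 by (intro exI[of _ "d0/2"]) auto
  qed
  have f_lip: "f r \<le> f r' + (2 * B' (2*r2) / r1) * \<bar>r - r'\<bar>"
    if r: "0 < r1" "r1 \<le> r" "r \<le> r2" "r1 \<le> r'" "r' \<le> r2" for r r' r1 r2
  proof (rule f_le)
    define C where "C = 2 * B' (2*r2) / r1"
    have C0: "0 \<le> C" using B' r by (simp add: C_def)
    have "0 \<le> C * \<bar>r - r'\<bar>" using C0 by simp
    then show "0 \<le> f r' + (2 * B' (2*r2) / r1) * \<bar>r - r'\<bar>"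
      using f_nonneg[of r'] unfolding C_def by linarith
    fix x assume x: "x \<in> P"
    have Np: "N x > 0" using x by (simp add: P_def)
    have "tm x r \<le> tm x r' + C * \<bar>r - r'\<bar>"
    proof (cases "N x \<le> r1")
      case True
      have "1 \<le> 2*r / N x - 1" "1 \<le> 2*r' / N x - 1" using True r Np by (auto simp: field_simps)
      then have "tm x r = tm x r'" by (simp add: tm_def clip_1)
      then show ?thesis using C0 by simp
    next
      case c2: False
      show ?thesis
      proof (cases "2*r2 \<le> N x")
        case True
        have "2*r / N x - 1 \<le> 0" "2*r' / N x - 1 \<le> 0" using True r Np by (auto simp: field_simps)
        then have "tm x r = tm x r'" by (simp add: tm_def clip_0)
        then show ?thesis using C0 by simp
      next
        case False
        then have FB: "F x \<le> B' (2*r2)" using B' x by (auto simp: P_def)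
        have "\<bar>clip (2*r / N x - 1) - clip (2*r' / N x - 1)\<bar> \<le> \<bar>(2*r / N x - 1) - (2*r' / N x - 1)\<bar>"
          by (rule clip_lip)
        also have "\<dots> = 2 * \<bar>r - r'\<bar> / N x"
        proof -
          have "(2*r / N x - 1) - (2*r' / N x - 1) = (2*(r - r')) / N x"
            by (simp add: diff_divide_distrib algebra_simps)
          moreover have "\<bar>2*(r - r')\<bar> = 2 * \<bar>r - r'\<bar>" by (simp only: abs_mult)
          ultimately show ?thesis using Np by (simp only: abs_divide)
        qed
        also have "\<dots> \<le> 2 * \<bar>r - r'\<bar> / r1" using c2 r Np by (intro divide_left_mono) auto
        finally have cl: "\<bar>clip (2*r / N x - 1) - clip (2*r' / N x - 1)\<bar> \<le> 2 * \<bar>r - r'\<bar> / r1" .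
        have "tm x r - tm x r' = F x * (clip (2*r / N x - 1) - clip (2*r' / N x - 1))"
          by (simp add: tm_def algebra_simps)
        also have "\<dots> \<le> F x * \<bar>clip (2*r / N x - 1) - clip (2*r' / N x - 1)\<bar>"
          using F0 x by (intro mult_left_mono) (auto simp: P_def)
        also have "\<dots> \<le> B' (2*r2) * (2 * \<bar>r - r'\<bar> / r1)"
          using F0 x FB cl B' by (intro mult_mono) (auto simp: P_def)
        also have "\<dots> = C * \<bar>r - r'\<bar>" by (simp add: C_def)
        finally show ?thesis by linarith
      qed
    qed
    also have "\<dots> \<le> f r' + C * \<bar>r - r'\<bar>" using f_ge[OF x, of r'] by linarith
    finally show "tm x r \<le> f r' + (2 * B' (2*r2) / r1) * \<bar>r - r'\<bar>" by (simp add: C_def)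
  qed
  have f_cont: "continuous_on {0..} f"
    unfolding continuous_on_iff
  proof (intro ballI allI impI)
    fix r0 e :: real assume r0: "r0 \<in> {0..}" and e: "e > 0"
    show "\<exists>d>0. \<forall>r\<in>{0..}. dist r r0 < d \<longrightarrow> dist (f r) (f r0) < e"
    proof (cases "r0 = 0")
      case True
      obtain d where d: "d > 0" "\<forall>r. 0 \<le> r \<and> r \<le> d \<longrightarrow> f r \<le> e/2" using f_small[of "e/2"] e by auto
      show ?thesis
      proof (intro exI[of _ d] conjI ballI impI)
        fix r assume "r \<in> {0::real..}" "dist r r0 < d"
        then have "f r \<le> e/2" using d True by (auto simp: dist_real_def)
        then show "dist (f r) (f r0) < e" using True f0 f_nonneg[of r] e by (simp add: dist_real_def)
      qed (use d in auto)
    next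
      case False
      then have r0p: "r0 > 0" using r0 by simp
      define C where "C = 2 * B' (2*(2*r0)) / (r0/2)"
      have C0: "0 \<le> C" using B' r0p by (simp add: C_def)
      define d where "d = min (r0/2) (e/(C+1))"
      have d0: "d > 0" using r0p e C0 by (simp add: d_def)
      show ?thesis
      proof (intro exI[of _ d] conjI ballI impI)
        fix r assume r: "r \<in> {0::real..}" "dist r r0 < d"
        then have a1: "\<bar>r - r0\<bar> < r0/2" and a2: "\<bar>r - r0\<bar> < e/(C+1)"
          by (auto simp: dist_real_def d_def)
        then have rr: "r0/2 \<le> r" "r \<le> 2*r0" "\<bar>r - r0\<bar> < e/(C+1)"
          using abs_less_iff[THEN iffD1, OF a1] a2 r0p by linarith+
        have "f r \<le> f r0 + C * \<bar>r - r0\<bar>" unfolding C_def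
          using rr r0p by (intro f_lip) auto
        moreover have "f r0 \<le> f r + C * \<bar>r0 - r\<bar>" unfolding C_def
          using rr r0p by (intro f_lip) auto
        moreover have "C * \<bar>r - r0\<bar> < e"
        proof -
          have "C * \<bar>r - r0\<bar> \<le> C * (e/(C+1))" using rr C0 by (intro mult_left_mono) auto
          also have "\<dots> < e" using C0 e by (simp add: field_simps)
          finally show ?thesis .
        qed
        ultimately show "dist (f r) (f r0) < e" by (simp add: dist_real_def abs_minus_commute)
      qed (use d0 in auto)
    qed
  qed
  define \<phi> where "\<phi> r = r + f r" for r
  have "classK \<phi>"
    unfolding classK_def
  proof (intro conjI)
    show "continuous_on {0..} \<phi>" unfolding \<phi>_def by (intro continuous_on_add continuous_on_id f_cont)
    show "strict_mono_on {0..} \<phi>"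
      unfolding strict_mono_on_def \<phi>_def using f_mono by (smt (verit))
    show "\<phi> 0 = 0" by (simp add: \<phi>_def f0)
  qed
  moreover have "\<forall>M. \<exists>t\<ge>0. \<phi> t > M"
  proof
    fix M :: real
    show "\<exists>t\<ge>0. \<phi> t > M"
      using f_nonneg[of "max 0 M + 1"] by (intro exI[of _ "max 0 M + 1"]) (auto simp: \<phi>_def)
  qed
  moreover have "\<forall>x\<in>A. F x \<le> \<phi> (N x)"
  proof
    fix x assume "x \<in> A"
    then show "F x \<le> \<phi> (N x)" using F_le[of x] N0 unfolding \<phi>_def by fastforce
  qed
  ultimately show ?thesis unfolding classKinf_def by blast
qed



lemma Kinf_nonneg: "classKinf g \<Longrightarrow> 0 \<le> x \<Longrightarrow> 0 \<le> g x"
  using K_nonneg classKinf_def by blast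

lemma L_majorant:
  fixes g :: "nat \<Rightarrow> real"
  assumes g0: "\<forall>n. 0 \<le> g n" and lim: "\<forall>\<epsilon>>0. \<exists>K. \<forall>n\<ge>K. g n \<le> \<epsilon>"
  shows "\<exists>lf. classL lf \<and> (\<forall>t\<ge>0. 0 < lf t) \<and> (\<forall>n. g n \<le> lf (real n))"
proof -
  obtain K1 where K1: "\<forall>n\<ge>K1. g n \<le> 1" using lim by (meson zero_less_one)
  have gb: "g n \<le> (\<Sum>m<K1. g m) + 1" for n
  proof (cases "n < K1")
    case True
    then have "g n \<le> (\<Sum>m<K1. g m)" using g0 by (intro member_le_sum) auto
    then show ?thesis by simp
  next
    case False
    have "0 \<le> (\<Sum>m<K1. g m)" using g0 by (intro sum_nonneg) auto
    moreover have "g n \<le> 1" using K1 False by simp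
    ultimately show ?thesis by linarith
  qed
  have "\<exists>\<phi>. classKinf \<phi> \<and> (\<forall>x\<in>UNIV. g x \<le> \<phi> (1 / (real x + 1)))"
  proof (rule K_majorant)
    show "\<forall>x\<in>UNIV. 0 \<le> g x" using g0 by simp
    show "\<forall>x\<in>UNIV. 0 \<le> 1 / (real x + 1)" by simp
    show "\<forall>r. \<exists>B. \<forall>x\<in>UNIV. 1 / (real x + 1) \<le> r \<longrightarrow> g x \<le> B" using gb by blast
    show "\<forall>\<epsilon>>0. \<exists>\<delta>>0. \<forall>x\<in>UNIV. 1 / (real x + 1) \<le> \<delta> \<longrightarrow> g x \<le> \<epsilon>"
    proof (intro allI impI)
      fix e :: real assume e: "e > 0"
      obtain K where K: "\<forall>n\<ge>K. g n \<le> e" using lim e by blast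
      have "g x \<le> e" if "1 / (real x + 1) \<le> 1 / (real K + 1)" for x
      proof -
        have "real K + 1 \<le> real x + 1" using that by (simp add: field_simps)
        then show ?thesis using K by simp
      qed
      then show "\<exists>\<delta>>0. \<forall>x\<in>UNIV. 1 / (real x + 1) \<le> \<delta> \<longrightarrow> g x \<le> e"
        by (intro exI[of _ "1 / (real K + 1)"]) auto
    qed
  qed
  then obtain \<phi> where phi: "classKinf \<phi>" "\<forall>x. g x \<le> \<phi> (1 / (real x + 1))" by auto
  have phK: "classK \<phi>" using phi by (simp add: classKinf_def)
  define lf where "lf t = \<phi> (1 / (t + 1))" for t :: real
  have pos: "0 < lf t" if "t \<ge> 0" for t
    unfolding lf_def using that by (intro K_pos[OF phK]) auto
  have "classL lf"
    unfolding classL_def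
  proof (intro conjI allI impI)
    have c1: "continuous_on {0..} (\<lambda>t::real. 1 / (t + 1))"
      by (intro continuous_intros) auto
    have c2: "continuous_on {0..} \<phi>" using phK by (simp add: classK_def)
    show "continuous_on {0..} lf" unfolding lf_def
      by (rule continuous_on_compose2[OF c2 c1]) auto
    fix x :: real assume "0 \<le> x" then show "0 \<le> lf x" using pos by (simp add: less_imp_le)
  next
    fix x y :: real assume xy: "0 \<le> x" "x < y"
    then have "1 / (y + 1) < 1 / (x + 1)" by (simp add: field_simps)
    then show "lf y < lf x" unfolding lf_def using xy by (intro K_strict[OF phK]) auto
  next
    show "(lf \<longlongrightarrow> 0) at_top"
    proof (rule tendstoI)
      fix e :: real assume e: "e > 0"
      obtain d where d: "d > 0" "\<forall>y. 0 \<le> y \<and> y \<le> d \<longrightarrow> \<phi> y < e" using K_cont0[OF phK e] by blast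
      have "\<forall>\<^sub>F t in at_top. t \<ge> 1/d" by (rule eventually_ge_at_top)
      then show "\<forall>\<^sub>F t in at_top. dist (lf t) 0 < e"
      proof (rule eventually_mono)
        fix t :: real assume t: "1/d \<le> t"
        have tp: "0 \<le> t" using t d by (meson less_eq_real_def order_trans zero_le_divide_1_iff)
        have "1 / (t + 1) \<le> d"
        proof -
          have "1 / d < t + 1" using t by simp
          then have "1 < d * (t + 1)" using d by (simp add: field_simps)
          then show ?thesis using tp by (simp add: field_simps)
        qed
        then have "\<phi> (1 / (t + 1)) < e" using d tp by simp
        moreover have "0 \<le> \<phi> (1 / (t + 1))" using K_nonneg[OF phK] tp by simp
        ultimately show "dist (lf t) 0 < e" by (simp add: lf_def dist_real_def)
      qed
    qed
  qed
  moreover have "\<forall>n. g n \<le> lf (real n)" using phi by (simp add: lf_def)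
  ultimately show ?thesis using pos by blast
qed



lemma sqrt_le_1plus: "0 \<le> x \<Longrightarrow> sqrt x \<le> 1 + x"
  by (rule real_le_lsqrt) (auto simp: power2_eq_square algebra_simps)

lemma KL_construct:
  fixes F :: "'a \<Rightarrow> nat \<Rightarrow> real" and N :: "'a \<Rightarrow> real" and A :: "'a set"
  assumes F0: "\<forall>a\<in>A. \<forall>n. 0 \<le> F a n" and N0: "\<forall>a\<in>A. 0 \<le> N a"
    and phi: "classKinf \<phi>" and Fphi: "\<forall>a\<in>A. \<forall>n. F a n \<le> \<phi> (N a)"
    and att: "\<forall>r>0. \<forall>\<epsilon>>0. \<exists>K. \<forall>a\<in>A. \<forall>n\<ge>K. N a \<le> r \<longrightarrow> F a n \<le> \<epsilon>"
  shows "\<exists>\<beta>. classKL \<beta> \<and> (\<forall>a\<in>A. \<forall>n. F a n \<le> \<beta> (N a) (real n))"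
proof -
  have phK: "classK \<phi>" using phi by (simp add: classKinf_def)
  have ph0: "\<phi> 0 = 0" using phK by (simp add: classK_def)
  define \<psi> where "\<psi> r = sqrt (\<phi> r) * (1 + \<phi> r)" for r
  have psi_ge: "\<phi> r \<le> \<psi> r" if "0 \<le> r" for r
  proof -
    have x0: "0 \<le> \<phi> r" using K_nonneg[OF phK that] .
    have "\<phi> r = sqrt (\<phi> r) * sqrt (\<phi> r)" using x0 by simp
    also have "\<dots> \<le> sqrt (\<phi> r) * (1 + \<phi> r)"
      using sqrt_le_1plus[OF x0] x0 by (intro mult_left_mono) auto
    finally show ?thesis by (simp add: \<psi>_def)
  qed
  have psi_nonneg: "0 \<le> \<psi> r" if "0 \<le> r" for r
    using K_nonneg[OF phK that] by (simp add: \<psi>_def)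
  have psi_pos: "0 < \<psi> r" if "0 < r" for r
    using K_pos[OF phK that] by (simp add: \<psi>_def add_pos_pos)
  have psi0: "\<psi> 0 = 0" by (simp add: \<psi>_def ph0)
  have psi_strict: "\<psi> x < \<psi> y" if "0 \<le> x" "x < y" for x y
  proof -
    have a: "\<phi> x < \<phi> y" by (rule K_strict[OF phK that])
    have b: "0 \<le> \<phi> x" by (rule K_nonneg[OF phK that(1)])
    have "sqrt (\<phi> x) < sqrt (\<phi> y)" using a by simp
    then show ?thesis unfolding \<psi>_def using a b
      by (intro mult_strict_mono) auto
  qed
  have psi_mono: "\<psi> x \<le> \<psi> y" if "0 \<le> x" "x \<le> y" for x y
    using psi_strict[of x y] that by (cases "x = y") auto
  have psi_cont: "continuous_on {0..} \<psi>"
  proof -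
    have "continuous_on {0..} \<phi>" using phK by (simp add: classK_def)
    then show ?thesis unfolding \<psi>_def by (intro continuous_intros)
  qed
  have psiK: "classK \<psi>" unfolding classK_def strict_mono_on_def using psi_cont psi_strict psi0 by auto
  define P where "P = {a\<in>A. 0 < N a}"
  define S where "S n = insert 0 ((\<lambda>a. F a n / \<psi> (N a)) ` P)" for n
  define g where "g n = Sup (S n)" for n
  have ratio_le1: "F a n / \<psi> (N a) \<le> 1" if "a \<in> P" for a n
  proof -
    have "F a n \<le> \<psi> (N a)" using Fphi psi_ge[of "N a"] that by (auto simp: P_def intro: order_trans)
    then show ?thesis using psi_pos[of "N a"] that by (simp add: P_def)
  qed
  have bdd: "bdd_above (S n)" for n
    unfolding bdd_above_def S_def using ratio_le1 by (auto intro!: exI[of _ 1])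
  have g_ge: "F a n / \<psi> (N a) \<le> g n" if "a \<in> P" for a n
    unfolding g_def using bdd that by (intro cSup_upper) (auto simp: S_def)
  have g0: "0 \<le> g n" for n
    unfolding g_def using bdd by (intro cSup_upper) (auto simp: S_def)
  have Fg: "F a n \<le> \<psi> (N a) * g n" if "a \<in> A" for a n
  proof (cases "N a = 0")
    case True
    then show ?thesis using Fphi that ph0 psi0 by auto
  next
    case False
    then have aP: "a \<in> P" using N0 that by (auto simp: P_def less_le)
    then have "F a n / \<psi> (N a) \<le> g n" by (rule g_ge)
    then show ?thesis using psi_pos[of "N a"] aP by (simp add: P_def pos_divide_le_eq mult.commute)
  qed
  have glim: "\<forall>\<epsilon>>0. \<exists>K. \<forall>n\<ge>K. g n \<le> \<epsilon>"
  proof (intro allI impI)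
    fix e :: real assume e: "e > 0"
    obtain r0 where r0: "r0 > 0" "\<forall>y. 0 \<le> y \<and> y \<le> r0 \<longrightarrow> \<phi> y < e^2"
      using K_cont0[OF phK, of "e^2"] e by auto
    obtain R where R: "R \<ge> 0" "\<phi> R > 1 / e^2" using phi unfolding classKinf_def by blast
    have Rp: "R > 0" using R ph0 e by (cases "R = 0") auto
    have er0: "e * \<psi> r0 > 0" using e psi_pos[OF r0(1)] by simp
    obtain K where K: "\<forall>a\<in>A. \<forall>n\<ge>K. N a \<le> R \<longrightarrow> F a n \<le> e * \<psi> r0"
      using att Rp er0 by blast
    have key: "F a n \<le> e * \<psi> (N a)" if a: "a \<in> P" and n: "n \<ge> K" for a n
    proof -
      have aA: "a \<in> A" and Np: "0 < N a" using a by (auto simp: P_def)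
      define x where "x = \<phi> (N a)"
      have x0: "0 \<le> x" unfolding x_def using K_nonneg[OF phK] Np by simp
      have sq: "sqrt x * sqrt x = x" using x0 by simp
      have Fx: "F a n \<le> x" using Fphi aA by (simp add: x_def)
      have psix: "\<psi> (N a) = sqrt x * (1 + x)" by (simp add: \<psi>_def x_def)
      show ?thesis
      proof (cases "N a \<le> r0")
        case True
        then have "x < e^2" using r0 Np unfolding x_def by auto
        then have "sqrt x < e" using e by (metis real_sqrt_less_mono abs_of_pos real_sqrt_abs)
        then have "sqrt x * sqrt x \<le> e * sqrt x" using x0 by (intro mult_right_mono) auto
        also have "\<dots> \<le> e * (sqrt x * (1 + x))" using e x0
          by (intro mult_left_mono) (auto simp: mult_le_cancel_left1)
        finally show ?thesis using Fx sq psix by simp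
      next
        case c2: False
        show ?thesis
        proof (cases "R \<le> N a")
          case True
          have "\<phi> R \<le> x" unfolding x_def using K_mono[OF phK R(1) True] .
          then have "1 / e^2 < x" using R by simp
          then have "1 < e^2 * x" using e by (simp add: field_simps)
          then have "sqrt 1 < sqrt (e^2 * x)" by (rule real_sqrt_less_mono)
          then have "1 < e * sqrt x" using e by (simp add: real_sqrt_mult)
          then have "sqrt x * sqrt x \<le> sqrt x * sqrt x * (e * sqrt x)"
            using x0 by (simp add: mult_le_cancel_left1)
          also have "\<dots> = e * (sqrt x * x)" using sq by (simp add: algebra_simps)
          also have "\<dots> \<le> e * (sqrt x * (1 + x))" using e x0
            by (intro mult_left_mono) auto
          finally show ?thesis using Fx sq psix by simp
        next
          case False
          then have "F a n \<le> e * \<psi> r0" using K aA n by auto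
          also have "\<dots> \<le> e * \<psi> (N a)" using c2 r0 e by (intro mult_left_mono psi_mono) auto
          finally show ?thesis .
        qed
      qed
    qed
    have "g n \<le> e" if "n \<ge> K" for n
      unfolding g_def
    proof (rule cSup_least)
      show "S n \<noteq> {}" by (simp add: S_def)
      fix y assume "y \<in> S n"
      then consider "y = 0" | a where "a \<in> P" "y = F a n / \<psi> (N a)" by (auto simp: S_def)
      then show "y \<le> e"
      proof cases
        case 1 then show ?thesis using e by simp
      next
        case 2
        have "0 < \<psi> (N a)" using psi_pos 2 by (simp add: P_def)
        then show ?thesis using key[OF 2(1) that] 2(2) by (simp add: pos_divide_le_eq mult.commute)
      qed
    qed
    then show "\<exists>K. \<forall>n\<ge>K. g n \<le> e" by blast
  qed
  obtain lf where lf: "classL lf" "\<forall>t\<ge>0. 0 < lf t" "\<forall>n. g n \<le> lf (real n)"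
    using L_majorant[of g] g0 glim by blast
  have lf_cont: "continuous_on {0..} lf" using lf(1) by (simp add: classL_def)
  define \<beta> where "\<beta> r t = \<psi> r * lf t" for r t
  have "classKL \<beta>"
    unfolding classKL_def
  proof (intro conjI allI impI)
    have eq: "(\<lambda>(r, t). \<beta> r t) = (\<lambda>x. \<psi> (fst x) * lf (snd x))" by (auto simp: \<beta>_def)
    have c1: "continuous_on ({0..} \<times> {0..}) (\<lambda>x::real\<times>real. \<psi> (fst x))"
      by (rule continuous_on_compose2[OF psi_cont continuous_on_fst[OF continuous_on_id]]) auto
    have c2: "continuous_on ({0..} \<times> {0..}) (\<lambda>x::real\<times>real. lf (snd x))"
      by (rule continuous_on_compose2[OF lf_cont continuous_on_snd[OF continuous_on_id]]) auto
    show "continuous_on ({0..} \<times> {0..}) (\<lambda>(r, t). \<beta> r t)"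
      unfolding eq by (rule continuous_on_mult[OF c1 c2])
  next
    fix t :: real assume t: "0 \<le> t"
    have lt: "0 < lf t" using lf(2) t by simp
    show "classK (\<lambda>r. \<beta> r t)"
      unfolding classK_def strict_mono_on_def \<beta>_def
    proof (intro conjI)
      show "continuous_on {0..} (\<lambda>r. \<psi> r * lf t)" by (intro continuous_on_mult_right psi_cont)
      show "\<forall>r s. r \<in> {0..} \<and> s \<in> {0..} \<and> r < s \<longrightarrow> \<psi> r * lf t < \<psi> s * lf t"
        using psi_strict lt by (auto intro: mult_strict_right_mono)
      show "\<psi> 0 * lf t = 0" by (simp add: psi0)
    qed
  next
    fix r :: real assume r: "0 < r"
    have pr: "0 < \<psi> r" using psi_pos r by simp
    show "classL (\<beta> r)"
      unfolding classL_def \<beta>_def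
    proof (intro conjI allI impI)
      show "continuous_on {0..} (\<lambda>t. \<psi> r * lf t)" by (intro continuous_on_mult_left lf_cont)
      fix x :: real assume "0 \<le> x" then show "0 \<le> \<psi> r * lf x" using lf(2) pr by (simp add: less_imp_le)
    next
      fix x y :: real assume xy: "0 \<le> x" "x < y"
      then have "lf y < lf x" using lf(1) by (simp add: classL_def)
      then show "\<psi> r * lf y < \<psi> r * lf x" using pr by simp
    next
      have "(lf \<longlongrightarrow> 0) at_top" using lf(1) by (simp add: classL_def)
      then show "((\<lambda>t. \<psi> r * lf t) \<longlongrightarrow> 0) at_top" by (rule tendsto_mult_right_zero)
    qed
  qed
  moreover have "\<forall>a\<in>A. \<forall>n. F a n \<le> \<beta> (N a) (real n)"
  proof (intro ballI allI)
    fix a n assume a: "a \<in> A"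
    have "F a n \<le> \<psi> (N a) * g n" by (rule Fg[OF a])
    also have "\<dots> \<le> \<psi> (N a) * lf (real n)"
      using lf(3) psi_nonneg N0 a by (intro mult_left_mono) auto
    finally show "F a n \<le> \<beta> (N a) (real n)" by (simp add: \<beta>_def)
  qed
  ultimately show ?thesis by blast
qed



locale sysl =
  fixes Ii :: "'i \<Rightarrow> 'i set" and T T' :: "('i \<Rightarrow> real) \<Rightarrow> ('i \<Rightarrow> real)"
  assumes nn: "\<And>s i. s \<in> linfp \<Longrightarrow> 0 \<le> T' s i"
    and mono': "\<And>s s' i. s \<in> linfp \<Longrightarrow> s' \<in> linfp \<Longrightarrow> (\<And>j. s j \<le> s' j) \<Longrightarrow> T' s i \<le> T' s' i"
    and le: "\<And>s i. s \<in> linfp \<Longrightarrow> T' s i \<le> T s i"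
    and cof: "cofinal (Psi T)"
    and nji: "uniform_NJI Ii T"
    and gap: "\<And>\<delta>. \<delta> > 0 \<Longrightarrow> \<exists>c>0. \<forall>v\<in>linfp. \<forall>j. \<delta> \<le> v j \<and> T v j < v j \<longrightarrow> T' v j \<le> v j - c"
    and cardb: "\<And>n. \<exists>C. \<forall>i. finite (Nin Ii i n) \<and> real (card (Nin Ii i n)) \<le> C"
begin

definition H where "H s = (\<lambda>i. max (s i) (T' s i))"

lemma Psi_linfp: "u \<in> Psi T \<Longrightarrow> u \<in> linfp" by (simp add: Psi_def)

lemma below: assumes s: "s \<in> linfp" and u: "u \<in> Psi T" and su: "\<And>i. s i \<le> u i"
  shows "T' s \<in> linfp" "\<And>i. T' s i \<le> u i"
proof -
  have ul: "u \<in> linfp" using u by (simp add: Psi_def)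
  show le_u: "T' s i \<le> u i" for i
  proof -
    have "T' s i \<le> T' u i" using mono'[OF s ul su] .
    also have "\<dots> \<le> T u i" using le[OF ul] .
    also have "\<dots> \<le> u i" using u by (simp add: Psi_def)
    finally show ?thesis .
  qed
  show "T' s \<in> linfp"
    using nn[OF s] le_u linfp_le_nrm[OF ul] by (intro linfp_I[of _ "nrm u"]) (meson order_trans)
qed

lemma Hbelow: assumes s: "s \<in> linfp" and u: "u \<in> Psi T" and su: "\<And>i. s i \<le> u i"
  shows "H s \<in> linfp" "\<And>i. H s i \<le> u i"
proof -
  have ul: "u \<in> linfp" using u by (simp add: Psi_def)
  show hu: "H s i \<le> u i" for i using below(2)[OF s u su] su by (simp add: H_def)
  show "H s \<in> linfp"
    using hu linfp_le_nrm[OF ul] linfp_nonneg[OF s]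
    by (intro linfp_I[of _ "nrm u"]) (auto simp: H_def le_max_iff_disj intro: order_trans)
qed

lemma iterH: assumes s: "s \<in> linfp" and u: "u \<in> Psi T" and su: "\<And>i. s i \<le> u i"
  shows "(H ^^ n) s \<in> linfp \<and> (\<forall>i. (H ^^ n) s i \<le> u i)"
proof (induction n)
  case 0 then show ?case using s su by simp
next
  case (Suc n) then show ?case using Hbelow[OF _ u, of "(H ^^ n) s"] by simp
qed

lemma iterT: assumes s: "s \<in> linfp" and u: "u \<in> Psi T" and su: "\<And>i. s i \<le> u i"
  shows "(T' ^^ n) s \<in> linfp \<and> (\<forall>i. (T' ^^ n) s i \<le> u i)"
proof (induction n)
  case 0 then show ?case using s su by simp
next
  case (Suc n) then show ?case using below[OF _ u, of "(T' ^^ n) s"] by simp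
qed

lemma cof_ex: assumes "0 \<le> c" shows "\<exists>u\<in>Psi T. \<forall>i. c \<le> u i"
proof -
  have "(\<lambda>_. c) \<in> linfp" using assms by (intro linfp_I[of _ c]) auto
  then show ?thesis using cof unfolding cofinal_def by auto
qed

lemma cof_s: assumes "s \<in> linfp" shows "\<exists>u\<in>Psi T. \<forall>i. s i \<le> u i"
  using cof assms unfolding cofinal_def by auto

lemma iterH_lin: "s \<in> linfp \<Longrightarrow> (H ^^ n) s \<in> linfp"
  using cof_s iterH by blast

lemma iterT_lin: "s \<in> linfp \<Longrightarrow> (T' ^^ n) s \<in> linfp"
  using cof_s iterT by blast

lemma T_le_H: assumes s: "s \<in> linfp" shows "(T' ^^ n) s i \<le> (H ^^ n) s i"
proof (induction n arbitrary: i)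
  case 0 then show ?case by simp
next
  case (Suc n)
  have "T' ((T' ^^ n) s) i \<le> T' ((H ^^ n) s) i"
    using Suc iterT_lin[OF s] iterH_lin[OF s] by (intro mono') auto
  also have "\<dots> \<le> H ((H ^^ n) s) i" by (simp add: H_def)
  finally show ?case by simp
qed

lemma vk: assumes s: "s \<in> linfp" shows "(H ^^ k) s j \<le> max (s j) (T' ((H ^^ k) s) j)"
proof (induction k)
  case 0 then show ?case by simp
next
  case (Suc k)
  define v where "v = (H ^^ k) s"
  have vl: "v \<in> linfp" unfolding v_def by (rule iterH_lin[OF s])
  have Hvl: "H v \<in> linfp" using iterH_lin[OF s, of "Suc k"] by (simp add: v_def)
  have m: "T' v j \<le> T' (H v) j" using vl Hvl by (intro mono') (auto simp: H_def)
  have eq: "(H ^^ Suc k) s = H v" by (simp add: v_def)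
  have IH: "v j \<le> max (s j) (T' v j)" using Suc by (simp add: v_def)
  have a: "v j \<le> max (s j) (T' (H v) j)" using IH m by linarith
  have b: "T' v j \<le> max (s j) (T' (H v) j)" using m by linarith
  have "H v j = max (v j) (T' v j)" by (simp add: H_def)
  then show ?case unfolding eq using a b by simp
qed

end



context sysl begin

lemma nrm_below: assumes "v \<in> linfp" "u \<in> linfp" "\<And>i. v i \<le> u i" shows "nrm v \<le> nrm u"
proof (rule nrm_le_nonneg)
  fix i
  show "0 \<le> v i \<and> v i \<le> nrm u"
    using linfp_nonneg[OF assms(1), of i] linfp_le_nrm[OF assms(2), of i] assms(3)[of i] by linarith
qed

lemma UGS_bound: "\<exists>\<phi>. classKinf \<phi> \<and> (\<forall>s\<in>linfp. \<forall>n. nrm ((H ^^ n) s) \<le> \<phi> (nrm s))"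
proof -
  have "\<exists>\<phi>. classKinf \<phi> \<and> (\<forall>x\<in>{x. fst x \<in> linfp}. nrm ((H ^^ snd x) (fst x)) \<le> \<phi> (nrm (fst x)))"
  proof (rule K_majorant)
    show "\<forall>x\<in>{x. fst x \<in> linfp}. 0 \<le> nrm ((H ^^ snd x) (fst x))"
      using iterH_lin nrm_nonneg by auto
    show "\<forall>x\<in>{x. fst x \<in> linfp}. 0 \<le> nrm (fst x)" using nrm_nonneg by auto
    show "\<forall>r. \<exists>B. \<forall>x\<in>{x. fst x \<in> linfp}. nrm (fst x) \<le> r \<longrightarrow> nrm ((H ^^ snd x) (fst x)) \<le> B"
    proof
      fix r :: real
      obtain u where u: "u \<in> Psi T" "\<forall>i. max r 0 \<le> u i" using cof_ex[of "max r 0"] by auto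
      have ul: "u \<in> linfp" using u Psi_linfp by auto
      have "nrm ((H ^^ n) s) \<le> nrm u" if s: "s \<in> linfp" "nrm s \<le> r" for s n
      proof -
        have su: "s i \<le> u i" for i using linfp_le_nrm[OF s(1), of i] s(2) u(2)[rule_format, of i] by linarith
        show ?thesis using iterH[OF s(1) u(1) su] ul by (intro nrm_below) auto
      qed
      then show "\<exists>B. \<forall>x\<in>{x. fst x \<in> linfp}. nrm (fst x) \<le> r \<longrightarrow> nrm ((H ^^ snd x) (fst x)) \<le> B"
        by auto
    qed
    show "\<forall>\<epsilon>>0. \<exists>\<delta>>0. \<forall>x\<in>{x. fst x \<in> linfp}. nrm (fst x) \<le> \<delta> \<longrightarrow> nrm ((H ^^ snd x) (fst x)) \<le> \<epsilon>"
    proof (intro allI impI)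
      fix e :: real assume e: "e > 0"
      obtain u where u: "u \<in> Psi T" "\<forall>i. 1 \<le> u i" using cof_ex[of 1] by auto
      have ul: "u \<in> linfp" using u Psi_linfp by auto
      define B where "B = nrm u"
      have B1: "1 \<le> B" using u(2)[rule_format, of undefined] linfp_le_nrm[OF ul, of undefined] by (simp add: B_def)
      obtain n \<delta> where nd: "\<delta> > 0" "\<forall>s\<in>linfp. \<forall>i. e/2 \<le> s i \<and> nrm s \<le> B \<longrightarrow>
          (\<exists>j\<in>Nin Ii i n. \<delta> \<le> s j \<and> T s j < s j)"
      proof -
        have B0: "B > 0" using B1 by simp
        have e2: "e/2 > 0" using e by simp
        show ?thesis using nji[unfolded uniform_NJI_def, rule_format, OF B0 e2] that by blast
      qed
      define d where "d = min \<delta> 1 / 2"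
      have d0: "d > 0" using nd by (simp add: d_def)
      have "nrm ((H ^^ k) s) \<le> e" if s: "s \<in> linfp" "nrm s \<le> d" for s k
      proof -
        have su: "s i \<le> u i" for i
          using linfp_le_nrm[OF s(1), of i] s(2) u(2)[rule_format, of i] by (simp add: d_def)
        define v where "v = (H ^^ k) s"
        have vl: "v \<in> linfp" and vu: "\<And>i. v i \<le> u i" using iterH[OF s(1) u(1) su] by (auto simp: v_def)
        have nv: "nrm v \<le> B" unfolding B_def using vl ul vu by (rule nrm_below)
        have "v i < e/2" for i
        proof (rule ccontr)
          assume "\<not> v i < e/2"
          then have "e/2 \<le> v i \<and> nrm v \<le> B" using nv by simp
          then obtain j where j: "\<delta> \<le> v j" "T v j < v j" using nd(2)[rule_format, OF vl, of i] by blast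
          have "T' v j < v j" using le[OF vl, of j] j by simp
          then have "v j \<le> s j" using vk[OF s(1), of k j] by (simp add: v_def)
          also have "\<dots> \<le> nrm s" by (rule linfp_le_nrm[OF s(1)])
          finally show False using s(2) j(1) nd(1) by (simp add: d_def)
        qed
        then have "nrm v \<le> e/2" using vl by (intro nrm_le_nonneg) (auto simp: linfp_nonneg less_imp_le)
        then show ?thesis using e by (simp add: v_def)
      qed
      then show "\<exists>\<delta>>0. \<forall>x\<in>{x. fst x \<in> linfp}. nrm (fst x) \<le> \<delta> \<longrightarrow> nrm ((H ^^ snd x) (fst x)) \<le> e"
        using d0 by auto
    qed
  qed
  then show ?thesis by auto
qed

lemma UGS_H: "UGS H" unfolding UGS_def using UGS_bound .

end



context sysl begin

lemma attract: "\<forall>r>0. \<forall>\<epsilon>>0. \<exists>K. \<forall>s\<in>linfp. \<forall>n\<ge>K. nrm s \<le> r \<longrightarrow> nrm ((T' ^^ n) s) \<le> \<epsilon>"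
proof (intro allI impI)
  fix r e :: real assume r: "r > 0" and e: "e > 0"
  obtain u where u: "u \<in> Psi T" "\<forall>i. r \<le> u i" using cof_ex[of r] r by auto
  have ul: "u \<in> linfp" using u Psi_linfp by auto
  define B where "B = nrm u"
  have Br: "r \<le> B" using u(2)[rule_format, of undefined] linfp_le_nrm[OF ul, of undefined] by (simp add: B_def)
  have B0: "B > 0" using Br r by simp
  define uu where "uu k = (T' ^^ k) u" for k
  have uul: "uu k \<in> linfp" and uuu: "uu k i \<le> u i" for k i
    using iterT[OF ul u(1), of k] by (auto simp: uu_def)
  have uuB: "nrm (uu k) \<le> B" for k unfolding B_def using uul ul uuu by (rule nrm_below)
  have uunn: "0 \<le> uu k i" for k i using linfp_nonneg[OF uul] .
  have uuS: "uu (Suc k) = T' (uu k)" for k by (simp add: uu_def)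
  have dec: "uu (Suc k) i \<le> uu k i" for k i
  proof (induction k arbitrary: i)
    case 0
    have "T' u i \<le> T u i" using le[OF ul] .
    also have "\<dots> \<le> u i" using u(1) by (simp add: Psi_def)
    finally show ?case by (simp add: uu_def)
  next
    case (Suc k)
    have l1: "T' (uu k) \<in> linfp" using uul[of "Suc k"] by (simp add: uuS)
    show ?case unfolding uuS[of "Suc k"] uuS[of k]
      using Suc l1 uul[of k] by (intro mono') (auto simp: uuS)
  qed
  have anti: "uu k i \<le> uu m i" if "m \<le> k" for m k i
    using lift_Suc_antimono_le[of "\<lambda>k. uu k i", OF dec that] .
  have e2: "e/2 > 0" using e by simp
  obtain n \<delta> where nd: "\<delta> > 0" "\<forall>s\<in>linfp. \<forall>i. e/2 \<le> s i \<and> nrm s \<le> B \<longrightarrow>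
          (\<exists>j\<in>Nin Ii i n. \<delta> \<le> s j \<and> T s j < s j)"
    using nji[unfolded uniform_NJI_def, rule_format, OF B0 e2] by blast
  obtain c where c: "c > 0" "\<forall>v\<in>linfp. \<forall>j. \<delta> \<le> v j \<and> T v j < v j \<longrightarrow> T' v j \<le> v j - c"
    using gap[OF nd(1)] by blast
  obtain C where C: "\<forall>i. finite (Nin Ii i n) \<and> real (card (Nin Ii i n)) \<le> C" using cardb by blast
  have claim: "real (Suc k) * c \<le> C * B" if ik: "e/2 \<le> uu k i" for i k
  proof -
    define S where "S = Nin Ii i n"
    have fS: "finite S" and cS: "real (card S) \<le> C" using C by (auto simp: S_def)
    have step: "c \<le> (\<Sum>j\<in>S. uu m j - uu (Suc m) j)" if m: "m < Suc k" for m
    proof -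
      have "e/2 \<le> uu m i" using ik anti[of m k i] m by simp
      then have "e/2 \<le> uu m i \<and> nrm (uu m) \<le> B" using uuB by simp
      then obtain j where j: "j \<in> S" "\<delta> \<le> uu m j" "T (uu m) j < uu m j"
        using nd(2)[rule_format, OF uul, of m i] unfolding S_def by blast
      have "T' (uu m) j \<le> uu m j - c" using c(2)[rule_format, OF uul, of m j] j by blast
      then have "c \<le> uu m j - uu (Suc m) j" by (simp add: uuS)
      also have "\<dots> \<le> (\<Sum>j\<in>S. uu m j - uu (Suc m) j)"
        using fS j(1) dec by (intro member_le_sum) (auto simp: algebra_simps)
      finally show ?thesis .
    qed
    have "real (Suc k) * c = (\<Sum>m<Suc k. c)" by simp
    also have "\<dots> \<le> (\<Sum>m<Suc k. \<Sum>j\<in>S. uu m j - uu (Suc m) j)" using step by (intro sum_mono) auto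
    also have "\<dots> = (\<Sum>j\<in>S. \<Sum>m<Suc k. uu m j - uu (Suc m) j)" by (rule sum.swap)
    also have "\<dots> = (\<Sum>j\<in>S. uu 0 j - uu (Suc k) j)" by (rule sum.cong[OF refl], rule sum_lessThan_telescope')
    also have "\<dots> \<le> (\<Sum>j\<in>S. B)"
    proof (rule sum_mono)
      fix j assume "j \<in> S"
      have "uu 0 j \<le> B" using linfp_le_nrm[OF uul, of 0 j] uuB[of 0] by linarith
      then show "uu 0 j - uu (Suc k) j \<le> B" using uunn[of "Suc k" j] by linarith
    qed
    also have "\<dots> = real (card S) * B" by simp
    also have "\<dots> \<le> C * B" using cS B0 by (intro mult_right_mono) auto
    finally show ?thesis .
  qed
  define K where "K = nat \<lceil>C * B / c\<rceil>"
  have small: "uu k i < e/2" if "k \<ge> K" for k i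
  proof (rule ccontr)
    assume "\<not> uu k i < e/2"
    then have "e/2 \<le> uu k i" by simp
    then have a: "real (Suc k) * c \<le> C * B" by (rule claim)
    have "C * B / c \<le> real K" unfolding K_def by linarith
    also have "\<dots> \<le> real k" using that by simp
    finally have "C * B \<le> real k * c" using c(1) by (simp add: field_simps)
    then show False using a c(1) by (simp add: algebra_simps)
  qed
  have "nrm ((T' ^^ k) s) \<le> e" if s: "s \<in> linfp" "k \<ge> K" "nrm s \<le> r" for s k
  proof -
    have su: "s i \<le> u i" for i using linfp_le_nrm[OF s(1), of i] s(3) u(2)[rule_format, of i] by linarith
    have cmp: "(T' ^^ m) s i \<le> uu m i" for m i
    proof (induction m arbitrary: i)
      case 0 then show ?case using su by (simp add: uu_def)
    next
      case (Suc m)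
      have "T' ((T' ^^ m) s) i \<le> T' (uu m) i"
        using Suc iterT_lin[OF s(1), of m] uul by (intro mono') auto
      then show ?case by (simp add: uuS)
    qed
    have "nrm ((T' ^^ k) s) \<le> e/2"
    proof (rule nrm_le_nonneg)
      fix i show "0 \<le> (T' ^^ k) s i \<and> (T' ^^ k) s i \<le> e/2"
        using linfp_nonneg[OF iterT_lin[OF s(1)], of k i] cmp[of k i] small[OF s(2), of i] by linarith
    qed
    then show ?thesis using e by simp
  qed
  then show "\<exists>K. \<forall>s\<in>linfp. \<forall>n\<ge>K. nrm s \<le> r \<longrightarrow> nrm ((T' ^^ n) s) \<le> e" by blast
qed

lemma UGAS_T: "UGAS T'"
proof -
  obtain \<phi> where phi: "classKinf \<phi>" "\<forall>s\<in>linfp. \<forall>n. nrm ((H ^^ n) s) \<le> \<phi> (nrm s)"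
    using UGS_bound by blast
  have "\<exists>\<beta>. classKL \<beta> \<and> (\<forall>a\<in>linfp. \<forall>n. nrm ((T' ^^ n) a) \<le> \<beta> (nrm a) (real n))"
  proof (rule KL_construct[OF _ _ phi(1)])
    show "\<forall>a\<in>linfp. \<forall>n. 0 \<le> nrm ((T' ^^ n) a)" using iterT_lin nrm_nonneg by blast
    show "\<forall>a\<in>linfp. 0 \<le> nrm a" using nrm_nonneg by blast
    show "\<forall>a\<in>linfp. \<forall>n. nrm ((T' ^^ n) a) \<le> \<phi> (nrm a)"
    proof (intro ballI allI)
      fix a :: "'i \<Rightarrow> real" and n :: nat assume a: "a \<in> linfp"
      have "nrm ((T' ^^ n) a) \<le> nrm ((H ^^ n) a)"
        using iterT_lin[OF a] iterH_lin[OF a] T_le_H[OF a] by (rule nrm_below)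
      then show "nrm ((T' ^^ n) a) \<le> \<phi> (nrm a)" using phi(2) a by (meson order_trans)
    qed
    show "\<forall>r>0. \<forall>\<epsilon>>0. \<exists>K. \<forall>a\<in>linfp. \<forall>n\<ge>K. nrm a \<le> r \<longrightarrow> nrm ((T' ^^ n) a) \<le> \<epsilon>"
      by (rule attract)
  qed
  then show ?thesis unfolding UGAS_def .
qed

end




lemma go_parts: assumes "gain_operator Ii gam mu"
  shows "\<forall>i. finite (Ii i) \<and> i \<notin> Ii i"
    and "\<forall>i. \<forall>j\<in>Ii i. classKinf (gam i j)"
    and "\<forall>i. \<forall>s\<in>linfp. 0 \<le> mu i s"
    and "\<forall>i. \<forall>s\<in>linfp. \<forall>s'\<in>linfp. (\<forall>j. s j \<le> s' j) \<longrightarrow> mu i s \<le> mu i s'"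
    and "\<forall>i. \<forall>J. finite J \<longrightarrow>
        (let V = {s\<in>linfp. \<forall>j. j \<notin> J \<longrightarrow> s j = 0} in
          (\<forall>s\<in>V. \<bar>mu i s\<bar> \<noteq> \<infinity>) \<and>
          (\<forall>s\<in>V. \<forall>\<epsilon>>0. \<exists>\<delta>>0. \<forall>t\<in>V. nrm (t - s) < \<delta> \<longrightarrow>
              \<bar>mu i t - mu i s\<bar> < ereal \<epsilon>))"
proof -
  note a = assms[unfolded gain_operator_def]
  show "\<forall>i. finite (Ii i) \<and> i \<notin> Ii i" using a by (elim conjE) assumption
  show "\<forall>i. \<forall>j\<in>Ii i. classKinf (gam i j)" using a by (elim conjE) assumption
  show "\<forall>i. \<forall>s\<in>linfp. 0 \<le> mu i s" using a by (elim conjE) assumption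
  show "\<forall>i. \<forall>s\<in>linfp. \<forall>s'\<in>linfp. (\<forall>j. s j \<le> s' j) \<longrightarrow> mu i s \<le> mu i s'" using a by (elim conjE) assumption
  show "\<forall>i. \<forall>J. finite J \<longrightarrow>
        (let V = {s\<in>linfp. \<forall>j. j \<notin> J \<longrightarrow> s j = 0} in
          (\<forall>s\<in>V. \<bar>mu i s\<bar> \<noteq> \<infinity>) \<and>
          (\<forall>s\<in>V. \<forall>\<epsilon>>0. \<exists>\<delta>>0. \<forall>t\<in>V. nrm (t - s) < \<delta> \<longrightarrow>
              \<bar>mu i t - mu i s\<bar> < ereal \<epsilon>))" using a by (elim conjE) assumption
qed

lemma go_fin: "gain_operator Ii gam mu \<Longrightarrow> finite (Ii i)"
  using go_parts(1) by blast

lemma go_gamK: "gain_operator Ii gam mu \<Longrightarrow> j \<in> Ii i \<Longrightarrow> classK (gam i j)"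
  using go_parts(2) unfolding classKinf_def by blast

lemma go_mu0: "gain_operator Ii gam mu \<Longrightarrow> s \<in> linfp \<Longrightarrow> 0 \<le> mu i s"
  using go_parts(3) by blast

lemma go_M2: "gain_operator Ii gam mu \<Longrightarrow> s \<in> linfp \<Longrightarrow> s' \<in> linfp \<Longrightarrow> (\<forall>j. s j \<le> s' j) \<Longrightarrow> mu i s \<le> mu i s'"
  using go_parts(4) by blast

lemma go_M3: assumes "gain_operator Ii gam mu" "finite J" "s \<in> linfp" "\<forall>j. j \<notin> J \<longrightarrow> s j = 0"
  shows "\<bar>mu i s\<bar> \<noteq> \<infinity>"
proof -
  have "\<forall>s\<in>{s\<in>linfp. \<forall>j. j \<notin> J \<longrightarrow> s j = 0}. \<bar>mu i s\<bar> \<noteq> \<infinity>"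
    using go_parts(5)[OF assms(1), rule_format, OF assms(2), of i] unfolding Let_def by (elim conjE)
  moreover have "s \<in> {s\<in>linfp. \<forall>j. j \<notin> J \<longrightarrow> s j = 0}" using assms(3,4) by simp
  ultimately show ?thesis by (rule bspec)
qed

definition argv :: "('i \<Rightarrow> 'i set) \<Rightarrow> ('i \<Rightarrow> 'i \<Rightarrow> real \<Rightarrow> real) \<Rightarrow> 'i \<Rightarrow> ('i \<Rightarrow> real) \<Rightarrow> ('i \<Rightarrow> real)" where
  "argv Ii gam i s = (\<lambda>j. if j \<in> Ii i then gam i j (s j) else 0)"

lemma Gam_argv: "Gam Ii gam mu s i = real_of_ereal (mu i (argv Ii gam i s))"
  by (simp add: Gam_def argv_def)

lemma argv_nonneg: assumes go: "gain_operator Ii gam mu" and s: "s \<in> linfp" shows "0 \<le> argv Ii gam i s j"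
proof (cases "j \<in> Ii i")
  case True
  then show ?thesis unfolding argv_def using K_nonneg[OF go_gamK[OF go True] linfp_nonneg[OF s]] by simp
qed (simp add: argv_def)

lemma argv_linfp: assumes go: "gain_operator Ii gam mu" and s: "s \<in> linfp"
  shows "argv Ii gam i s \<in> linfp"
proof (rule linfp_I[of _ "\<Sum>j\<in>Ii i. gam i j (s j)"])
  fix j
  have nn: "0 \<le> gam i j (s j)" if "j \<in> Ii i" for j using K_nonneg[OF go_gamK[OF go that] linfp_nonneg[OF s]] .
  have "argv Ii gam i s j \<le> (\<Sum>j\<in>Ii i. gam i j (s j))"
  proof (cases "j \<in> Ii i")
    case True
    have "gam i j (s j) \<le> (\<Sum>j\<in>Ii i. gam i j (s j))"
      using go_fin[OF go] nn True by (intro member_le_sum) auto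
    then show ?thesis using True by (simp add: argv_def)
  next
    case False
    have "0 \<le> (\<Sum>j\<in>Ii i. gam i j (s j))" using nn by (intro sum_nonneg) auto
    then show ?thesis using False by (simp add: argv_def)
  qed
  then show "0 \<le> argv Ii gam i s j \<and> argv Ii gam i s j \<le> (\<Sum>j\<in>Ii i. gam i j (s j))"
    using argv_nonneg[OF go s] by blast
qed

lemma Gam_nonneg: "gain_operator Ii gam mu \<Longrightarrow> s \<in> linfp \<Longrightarrow> 0 \<le> Gam Ii gam mu s i"
proof -
  assume go: "gain_operator Ii gam mu" and s: "s \<in> linfp"
  have "0 \<le> mu i (argv Ii gam i s)" using go_mu0[OF go argv_linfp[OF go s]] .
  then show ?thesis unfolding Gam_argv by (rule real_of_ereal_pos)
qed

lemma Gam_mono: assumes go: "gain_operator Ii gam mu" and s: "s \<in> linfp" and s': "s' \<in> linfp"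
  and le: "\<And>j. s j \<le> s' j"
  shows "Gam Ii gam mu s i \<le> Gam Ii gam mu s' i"
proof -
  have a: "argv Ii gam i s j \<le> argv Ii gam i s' j" for j
  proof (cases "j \<in> Ii i")
    case True
    then show ?thesis unfolding argv_def using K_mono[OF go_gamK[OF go True] linfp_nonneg[OF s] le] by simp
  qed (simp add: argv_def)
  have "mu i (argv Ii gam i s) \<le> mu i (argv Ii gam i s')"
    using go_M2[OF go argv_linfp[OF go s] argv_linfp[OF go s']] a by blast
  moreover have "0 \<le> mu i (argv Ii gam i s)" using go_mu0[OF go argv_linfp[OF go s]] .
  moreover have "\<bar>mu i (argv Ii gam i s')\<bar> \<noteq> \<infinity>"
  proof (rule go_M3[OF go go_fin[OF go, of i] argv_linfp[OF go s']])
    show "\<forall>j. j \<notin> Ii i \<longrightarrow> argv Ii gam i s' j = 0" by (simp add: argv_def)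
  qed
  ultimately show ?thesis unfolding Gam_argv by (intro real_of_ereal_positive_mono) auto
qed

lemma Gam_rho_nonneg: "gain_operator Ii gam mu \<Longrightarrow> classK r \<Longrightarrow> s \<in> linfp \<Longrightarrow> 0 \<le> Gam_rho Ii gam mu r s i"
proof -
  assume go: "gain_operator Ii gam mu" and r: "classK r" and s: "s \<in> linfp"
  have a: "0 \<le> Gam Ii gam mu s i" by (rule Gam_nonneg[OF go s])
  have "0 \<le> r (Gam Ii gam mu s i)" by (rule K_nonneg[OF r a])
  then show ?thesis unfolding Gam_rho_def using a by simp
qed

lemma Gam_rho_mono: assumes go: "gain_operator Ii gam mu" and r: "classK r"
  and s: "s \<in> linfp" and s': "s' \<in> linfp" and le: "\<And>j. s j \<le> s' j"
  shows "Gam_rho Ii gam mu r s i \<le> Gam_rho Ii gam mu r s' i"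
proof -
  have a: "Gam Ii gam mu s i \<le> Gam Ii gam mu s' i" using Gam_mono[OF go s s' le] .
  have "r (Gam Ii gam mu s i) \<le> r (Gam Ii gam mu s' i)"
    using K_mono[OF r Gam_nonneg[OF go s] a] .
  then show ?thesis unfolding Gam_rho_def using a by simp
qed



lemma rho_gap: assumes r: "classK \<rho>" and d: "\<delta> > 0"
  shows "\<exists>c>0. \<forall>x g. \<delta> \<le> x \<and> 0 \<le> g \<and> g + \<rho> g < x \<longrightarrow> g + \<rho> g / 2 \<le> x - c"
proof -
  obtain d0 where d0: "d0 > 0" "\<forall>y. 0 \<le> y \<and> y \<le> d0 \<longrightarrow> \<rho> y < \<delta>/4" using K_cont0[OF r, of "\<delta>/4"] d by auto
  define g0 where "g0 = min d0 (\<delta>/4)"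
  have g0p: "g0 > 0" using d0 d by (simp add: g0_def)
  have rg0: "\<rho> g0 < \<delta>/4" using d0 g0p by (simp add: g0_def)
  have rg0p: "\<rho> g0 > 0" using K_pos[OF r g0p] .
  define c where "c = min (\<rho> g0 / 2) (\<delta>/2)"
  have cp: "c > 0" using rg0p d by (simp add: c_def)
  have "g + \<rho> g / 2 \<le> x - c" if h: "\<delta> \<le> x" "0 \<le> g" "g + \<rho> g < x" for x g
  proof (cases "g0 \<le> g")
    case True
    have "\<rho> g0 \<le> \<rho> g" using K_mono[OF r _ True] g0p by simp
    then show ?thesis using h by (simp add: c_def)
  next
    case False
    have "\<rho> g \<le> \<rho> g0" using K_mono[OF r h(2)] False by simp
    moreover have "g0 \<le> \<delta>/4" by (simp add: g0_def)
    ultimately show ?thesis using h rg0 False by (simp add: c_def)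
  qed
  then show ?thesis using cp by blast
qed



lemma Nin_0: "Nin Ii i 0 \<subseteq> {i}"
  unfolding Nin_def by auto

lemma Nin_Suc: "Nin Ii i (Suc n) \<subseteq> insert i (\<Union>l\<in>Ii i. Nin Ii l n)"
proof
  fix j assume "j \<in> Nin Ii i (Suc n)"
  then obtain m p where mp: "m \<le> Suc n" "p 0 = j" "p m = i" "\<forall>k<m. p k \<in> Ii (p (Suc k))"
    unfolding Nin_def by blast
  show "j \<in> insert i (\<Union>l\<in>Ii i. Nin Ii l n)"
  proof (cases m)
    case 0 then show ?thesis using mp by simp
  next
    case (Suc m')
    have "p m' \<in> Ii i" using mp Suc by auto
    moreover have "j \<in> Nin Ii (p m') n"
      unfolding Nin_def using mp Suc by (intro CollectI exI[of _ m'] conjI exI[of _ p]) auto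
    ultimately show ?thesis by blast
  qed
qed

lemma Nin_card: assumes fin: "\<And>i. finite (Ii i)" and cb: "\<And>i. real (card (Ii i)) \<le> M" and M0: "0 \<le> M"
  shows "finite (Nin Ii i n) \<and> real (card (Nin Ii i n)) \<le> (M + 1) ^ n"
proof (induction n arbitrary: i)
  case 0
  have "finite (Nin Ii i 0)" by (rule finite_subset[OF Nin_0]) simp
  moreover have "card (Nin Ii i 0) \<le> card {i}" using Nin_0[of Ii i] by (intro card_mono) auto
  ultimately show ?case by simp
next
  case (Suc n)
  define X where "X = (\<Union>l\<in>Ii i. Nin Ii l n)"
  have fX: "finite X" unfolding X_def using Suc fin by (intro finite_UN_I) auto
  have cX: "real (card X) \<le> M * (M + 1) ^ n"
  proof -
    have "card X \<le> (\<Sum>l\<in>Ii i. card (Nin Ii l n))" unfolding X_def using fin by (rule card_UN_le)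
    then have "real (card X) \<le> (\<Sum>l\<in>Ii i. real (card (Nin Ii l n)))" by (metis of_nat_le_iff of_nat_sum)
    also have "\<dots> \<le> real (card (Ii i)) * (M + 1) ^ n" using Suc by (intro sum_bounded_above) auto
    also have "\<dots> \<le> M * (M + 1) ^ n" using cb M0 by (intro mult_right_mono) auto
    finally show ?thesis .
  qed
  have fI: "finite (insert i X)" using fX by simp
  have "card (insert i X) \<le> Suc (card X)" using fX by (simp add: card_insert_if)
  then have "real (card (insert i X)) \<le> 1 + M * (M + 1) ^ n" using cX by linarith
  also have "\<dots> \<le> (M + 1) ^ n + M * (M + 1) ^ n" using M0 by (simp add: one_le_power)
  also have "\<dots> = (M + 1) ^ Suc n" by (simp add: algebra_simps)
  finally have ci: "real (card (insert i X)) \<le> (M + 1) ^ Suc n" .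
  have sub: "Nin Ii i (Suc n) \<subseteq> insert i X" unfolding X_def by (rule Nin_Suc)
  have "finite (Nin Ii i (Suc n))" by (rule finite_subset[OF sub fI])
  moreover have "card (Nin Ii i (Suc n)) \<le> card (insert i X)" by (rule card_mono[OF fI sub])
  moreover have "real (card (Nin Ii i (Suc n))) \<le> real (card (insert i X))"
    using \<open>card (Nin Ii i (Suc n)) \<le> card (insert i X)\<close> by simp
  ultimately show ?case using ci by linarith
qed




theorem corollary2p21:
  fixes Ii :: "'i::countable \<Rightarrow> 'i set"
    and gam :: "'i \<Rightarrow> 'i \<Rightarrow> real \<Rightarrow> real"
    and mu :: "'i \<Rightarrow> ('i \<Rightarrow> real) \<Rightarrow> ereal"
    and \<rho> :: "real \<Rightarrow> real"
  assumes "gain_operator Ii gam mu"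
    and "assumptionA Ii gam"
    and "classKinf \<rho>"
    and "cofinal (Psi (Gam_rho Ii gam mu \<rho>))"
    and "uniform_NJI Ii (Gam_rho Ii gam mu \<rho>)"
    and "\<exists>M>0. \<forall>i. real (card (Ii i)) \<le> M"
  shows "\<exists>\<rho>'. classKinf \<rho>'
           \<and> UGS (\<lambda>s i. max (s i) (Gam_rho Ii gam mu \<rho>' s i))
           \<and> UGAS (Gam_rho Ii gam mu \<rho>')"
proof -
  note go = assms(1)
  have rK: "classK \<rho>" using assms(3) by (simp add: classKinf_def)
  define \<rho>' where "\<rho>' = (\<lambda>x. \<rho> x / 2)"
  have r'K: "classK \<rho>'"
  proof -
    have "continuous_on {0..} \<rho>" using rK by (simp add: classK_def)
    then have "continuous_on {0..} \<rho>'" unfolding \<rho>'_def by (intro continuous_intros) auto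
    moreover have "strict_mono_on {0..} \<rho>'"
      unfolding \<rho>'_def strict_mono_on_def using K_strict[OF rK] by auto
    moreover have "\<rho>' 0 = 0" using rK by (simp add: classK_def \<rho>'_def)
    ultimately show ?thesis by (simp add: classK_def)
  qed
  have r'Kinf: "classKinf \<rho>'"
  proof -
    have "\<exists>t\<ge>0. \<rho>' t > M" for M
    proof -
      obtain t where "t \<ge> 0" "\<rho> t > 2 * M" using assms(3) unfolding classKinf_def by blast
      then show ?thesis by (intro exI[of _ t]) (auto simp: \<rho>'_def)
    qed
    then show ?thesis using r'K by (simp add: classKinf_def)
  qed
  define T where "T = Gam_rho Ii gam mu \<rho>"
  define T' where "T' = Gam_rho Ii gam mu \<rho>'"
  obtain M where M: "M > 0" "\<forall>i. real (card (Ii i)) \<le> M" using assms(6) by blast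
  have S: "sysl Ii T T'"
  proof
    show "\<And>s i. s \<in> linfp \<Longrightarrow> 0 \<le> T' s i" unfolding T'_def using Gam_rho_nonneg[OF go r'K] by blast
    show "\<And>s s' i. s \<in> linfp \<Longrightarrow> s' \<in> linfp \<Longrightarrow> (\<And>j. s j \<le> s' j) \<Longrightarrow> T' s i \<le> T' s' i"
      unfolding T'_def using Gam_rho_mono[OF go r'K] by blast
    show "\<And>s i. s \<in> linfp \<Longrightarrow> T' s i \<le> T s i"
    proof -
      fix s :: "'i \<Rightarrow> real" and i :: 'i assume s: "s \<in> linfp"
      have "0 \<le> \<rho> (Gam Ii gam mu s i)" using K_nonneg[OF rK Gam_nonneg[OF go s]] .
      then show "T' s i \<le> T s i" by (simp add: T_def T'_def Gam_rho_def \<rho>'_def)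
    qed
    show "cofinal (Psi T)" using assms(4) by (simp add: T_def)
    show "uniform_NJI Ii T" using assms(5) by (simp add: T_def)
    show "\<And>\<delta>. \<delta> > 0 \<Longrightarrow> \<exists>c>0. \<forall>v\<in>linfp. \<forall>j. \<delta> \<le> v j \<and> T v j < v j \<longrightarrow> T' v j \<le> v j - c"
    proof -
      fix \<delta> :: real assume d: "\<delta> > 0"
      obtain c where c: "c > 0" "\<forall>x g. \<delta> \<le> x \<and> 0 \<le> g \<and> g + \<rho> g < x \<longrightarrow> g + \<rho> g / 2 \<le> x - c"
        using rho_gap[OF rK d] by blast
      have "T' v j \<le> v j - c" if v: "v \<in> linfp" "\<delta> \<le> v j" "T v j < v j" for v :: "'i \<Rightarrow> real" and j
      proof -
        have "0 \<le> Gam Ii gam mu v j" by (rule Gam_nonneg[OF go v(1)])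
        then show ?thesis using c(2) v(2,3) by (simp add: T_def T'_def Gam_rho_def \<rho>'_def)
      qed
      then show "\<exists>c>0. \<forall>v\<in>linfp. \<forall>j. \<delta> \<le> v j \<and> T v j < v j \<longrightarrow> T' v j \<le> v j - c"
        using c(1) by blast
    qed
    show "\<And>n. \<exists>C. \<forall>i. finite (Nin Ii i n) \<and> real (card (Nin Ii i n)) \<le> C"
    proof -
      fix n :: nat
      have "finite (Nin Ii i n) \<and> real (card (Nin Ii i n)) \<le> (M + 1) ^ n" for i
        using Nin_card[of Ii M i n] go_fin[OF go] M by auto
      then show "\<exists>C. \<forall>i. finite (Nin Ii i n) \<and> real (card (Nin Ii i n)) \<le> C" by blast
    qed
  qed
  have H: "sysl.H T' = (\<lambda>s i. max (s i) (T' s i))"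
    using sysl.H_def[OF S] by (intro ext) simp
  have "UGS (\<lambda>s i. max (s i) (T' s i))" using sysl.UGS_H[OF S] H by simp
  moreover have "UGAS T'" using sysl.UGAS_T[OF S] .
  ultimately show ?thesis using r'Kinf unfolding T'_def by blast
qed


end
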